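(* For every integer $r\ge2$, $$\log\mathcal C_r\left(\frac14\right)=\left(\frac14\right)^{r-1}\left(-\frac12\log2+(r-1)\sum_{n=1}^\infty\frac{\lambda(2n)}{n(2n+r-1)2^{2n}}\right).$$
   Context: For an integer $r\ge2$ let $P_r(y)=(1-y)\exp\left(y+\frac{y^2}{2}+\cdots+\frac{y^r}{r}\right)$. The multiple cosine function of Kurokawa–Koyama of order $r\ge2$ is $\mathcal C_r(x)=\prod_{n\ge1,\ n\text{ odd}}\left\{P_r\left(\frac{x}{n/2}\right)P_r\left(-\frac{x}{n/2}\right)^{(-1)^{r-1}}\right\}^{(n/2)^{r-1}}$, interpreted as $\mathcal C_r(x)=\exp\Big(\sum_{n\ge1,\,n\text{ odd}}(n/2)^{r-1}\big[\operatorname{Log}P_r(2x/n)+(-1)^{r-1}\operatorname{Log}P_r(-2x/n)\big]\Big)$, where $\operatorname{Log}P_r(y):=\operatorname{Log}(1-y)+y+\frac{y^2}{2}+\cdots+\frac{y^r}{r}$ with $\operatorname{Log}$ the principal branch. The series converges and defines a holomorphic function on $D=\mathbb C\setminus\big((-\infty,-\tfrac12]\cup[\tfrac12,\infty)\big)$, positive on $(-\tfrac12,\tfrac12)$; $\log\mathcal C_r(x)$ denotes the exponent above (the real logarithm for real $|x|<\tfrac12$). $\lambda(s)=\sum_{n=0}^\infty\frac1{(2n+1)^s}$. *)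

theory Defs
  imports "HOL-Analysis.Analysis"
begin

definition LogP :: "nat \<Rightarrow> complex \<Rightarrow> complex" where
  "LogP r y = Ln (1 - y) + (\<Sum>k=1..r. y ^ k / of_nat k)"

definition logC :: "nat \<Rightarrow> complex \<Rightarrow> complex" where
  "logC r x = (\<Sum>m. let n = of_nat (2 * m + 1) :: complex in
       (n / 2) ^ (r - 1) * (LogP r (2 * x / n) + (-1) ^ (r - 1) * LogP r (- 2 * x / n)))"

definition dlambda :: "real \<Rightarrow> real" where
  "dlambda s = (\<Sum>n. 1 / (real (2 * n + 1)) powr s)"

end

theory Submission
  imports Defs
begin


definition LPr :: "nat \<Rightarrow> real \<Rightarrow> real" where
  "LPr r y = ln (1 - y) + (\<Sum>k=1..r. y ^ k / real k)"

lemma LogP_real: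
  assumes "y < 1" shows "LogP r (complex_of_real y) = complex_of_real (LPr r y)"
proof -
  have "1 - complex_of_real y = complex_of_real (1 - y)" by simp
  then have "Ln (1 - complex_of_real y) = complex_of_real (ln (1 - y))"
    using Ln_of_real[of "1 - y"] assms by simp
  then show ?thesis unfolding LogP_def LPr_def by simp
qed

lemma LPr_sums:
  assumes "\<bar>y\<bar> < 1"
  shows "(\<lambda>i. - (y ^ (i + Suc r)) / real (i + Suc r)) sums LPr r y"
proof -
  have "(\<lambda>n. - ((-(-y))^n)/of_nat n) sums ln (1 + -y)" by (rule ln_series') (simp add: assms)
  hence h: "(\<lambda>n. -(y^n)/real n) sums ln(1-y)" by simp
  have s: "(\<Sum>i<Suc r. -(y^i)/real i) = - (\<Sum>k=1..r. y ^ k / real k)"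
  proof -
    have "{..<Suc r} = insert 0 {1..r}" by auto
    then show ?thesis by (simp add: sum_negf)
  qed
  have "(\<lambda>n. -(y^n)/real n) sums (LPr r y + (\<Sum>i<Suc r. -(y^i)/real i))"
    unfolding s LPr_def using h by simp
  from sums_iff_shift[THEN iffD2, OF this] show ?thesis by simp
qed

lemma term_eq:
  assumes "a \<noteq> 0" "r \<ge> 2"
  shows "(1/a)^(r-1) * (- (a ^ (i + Suc r)) / real (i + Suc r) +
     (-1)^(r-1) * (- ((-a) ^ (i + Suc r)) / real (i + Suc r)))
   = (if even i then -2 * a^(i+2) / real (i + r + 1) else 0)"
proof -
  obtain q where q: "r = Suc q" using assms by (cases r) auto
  have p1: "(-a) ^ (i + Suc r) = (-1)^(i + Suc r) * a ^ (i + Suc r)"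
    by (simp add: power_minus')
  have p2: "(-1::real)^q * (-1)^(i + Suc r) = (-1)^i"
  proof -
    have e: "q + (i + Suc r) = i + 2*(q+1)" using q by simp
    have "(-1::real)^q * (-1)^(i + Suc r) = (-1)^(q + (i + Suc r))" by (simp only: power_add)
    also have "\<dots> = (-1)^(i + 2*(q+1))" by (simp only: e)
    also have "\<dots> = (-1)^i" by (simp only: power_add power_mult) simp
    finally show ?thesis .
  qed
  have p3: "(1/a)^q * a ^ (i + Suc r) = a^(i+2)"
    using q assms by (simp add: power_add field_simps)
  have "(1/a)^(r-1) * (- (a ^ (i + Suc r)) / real (i + Suc r) +
     (-1)^(r-1) * (- ((-a) ^ (i + Suc r)) / real (i + Suc r)))
    = - ((1/a)^q * a ^ (i + Suc r)) * (1 + (-1)^q * (-1)^(i + Suc r)) / real (i + Suc r)"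
  proof -
    have g: "\<And>(cc::real) (xx::real) (yy::real) (ss::real) (dd::real). dd > 0 \<Longrightarrow>
        cc*(-xx/dd + ss*(-(yy*xx)/dd)) = -(cc*xx)*(1+ss*yy)/dd"
      by (simp add: field_simps)
    have rq: "r - 1 = q" using q by simp
    show ?thesis unfolding rq p1 by (rule g) simp
  qed
  note s1 = this
  have s2: "- ((1/a)^q * a ^ (i + Suc r)) * (1 + (-1)^q * (-1)^(i + Suc r)) / real (i + Suc r)
      = - (a^(i+2)) * (1 + (-1)^i) / real (i + r + 1)"
    unfolding p2 p3 by simp
  show ?thesis unfolding s1 s2 by auto
qed

lemma key_sums:
  assumes "0 < a" "a < 1" "r \<ge> 2"
  shows "(\<lambda>j. real (r-1) * a^(2*j+2) / (real (j+1) * real (2*j+r+1))) sums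
     ((1/a)^(r-1) * (LPr r a + (-1)^(r-1) * LPr r (-a)) - ln (1 - a^2))"
proof -
  have h1: "(\<lambda>i. - (a ^ (i + Suc r)) / real (i + Suc r)) sums LPr r a"
    by (rule LPr_sums) (use assms in auto)
  have h2: "(\<lambda>i. - ((-a) ^ (i + Suc r)) / real (i + Suc r)) sums LPr r (-a)"
    by (rule LPr_sums) (use assms in auto)
  have h3: "(\<lambda>i. (1/a)^(r-1) * (- (a ^ (i + Suc r)) / real (i + Suc r) +
     (-1)^(r-1) * (- ((-a) ^ (i + Suc r)) / real (i + Suc r)))) sums
     ((1/a)^(r-1) * (LPr r a + (-1)^(r-1) * LPr r (-a)))"
    by (intro sums_mult sums_add h1 h2)
  define f where "f i = (if even i then -2 * a^(i+2) / real (i + r + 1) else 0)" for i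
  have h4: "f sums ((1/a)^(r-1) * (LPr r a + (-1)^(r-1) * LPr r (-a)))"
    using h3 unfolding f_def using term_eq[of a r] assms by simp
  have sm: "strict_mono (\<lambda>j::nat. 2 * j)" by (simp add: strict_mono_def)
  have "(\<lambda>j. f (2*j)) sums ((1/a)^(r-1) * (LPr r a + (-1)^(r-1) * LPr r (-a)))"
  proof -
    have z: "f n = 0" if "n \<notin> range (\<lambda>j::nat. 2 * j)" for n
      using that unfolding f_def by (auto elim!: evenE)
    show ?thesis by (subst sums_mono_reindex[OF sm]) (use z h4 in auto)
  qed
  hence h5: "(\<lambda>j. -2 * a^(2*j+2) / real (2*j + r + 1)) sums
      ((1/a)^(r-1) * (LPr r a + (-1)^(r-1) * LPr r (-a)))"
    unfolding f_def by simp
  have "(\<lambda>n. - ((-(-(a^2)))^n)/of_nat n) sums ln (1 + -(a^2))"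
    by (rule ln_series') (use assms in \<open>simp add: abs_square_less_1\<close>)
  hence "(\<lambda>n. - ((a^2)^n)/real n) sums ln (1 - a^2)" by simp
  hence h6: "(\<lambda>j. - (a^(2*j+2))/real (j+1)) sums ln (1 - a^2)"
  proof -
    assume hh: "(\<lambda>n. - ((a^2)^n)/real n) sums ln (1 - a^2)"
    have "(\<lambda>n. (\<lambda>n. - ((a^2)^n)/real n) (Suc n)) sums ln (1 - a^2)"
      using hh by (subst sums_Suc_iff) simp
    moreover have "(a^2)^(Suc n) = a^(2*n+2)" for n
      by (metis add.commute mult.commute power_Suc2 power_add power_mult power2_eq_square mult_2)
    ultimately show ?thesis by simp
  qed
  have "(\<lambda>j. -2 * a^(2*j+2) / real (2*j + r + 1) - - (a^(2*j+2))/real (j+1)) sums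
     ((1/a)^(r-1) * (LPr r a + (-1)^(r-1) * LPr r (-a)) - ln (1 - a^2))"
    by (intro sums_diff h5 h6)
  moreover have "-2 * a^(2*j+2) / real (2*j + r + 1) - - (a^(2*j+2))/real (j+1) =
     real (r-1) * a^(2*j+2) / (real (j+1) * real (2*j+r+1))" for j
  proof -
    have aux: "\<And>D1 D2 c b::real. D1 > 0 \<Longrightarrow> D2 > 0 \<Longrightarrow> D2 = 2*D1 + c \<Longrightarrow>
       -2*b/D2 - -b/D1 = c*b/(D1*D2)"
      by (simp add: field_simps)
    have "real (2*j+r+1) = 2 * real (j+1) + real (r-1)" using assms by simp
    from aux[OF _ _ this, of "a^(2*j+2)"] show ?thesis by (simp add: mult_ac)
  qed
  ultimately show ?thesis by simp
qed




lemma ln2_sums: "(\<lambda>m. ln (1 - (1/(2*real(2*m+1)))^2)) sums (-(1/2)*ln 2)"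
proof -
  define Q where "Q x n = (\<Prod>k=1..n. 1 - x^2/real k^2)" for x :: real and n
  define P where "P N = (\<Prod>m<N. 1 - (1/(2*real(2*m+1)))^2)" for N
  have split: "Q (1/2) (2*N) = P N * Q (1/4) N" for N
  proof (induction N)
    case 0 then show ?case by (simp add: Q_def P_def)
  next
    case (Suc N)
    have e1: "Q (1/2) (2*Suc N) = Q (1/2) (2*N) * (1 - (1/2)^2/real (Suc (2*N))^2) *
       (1 - (1/2)^2/real (Suc (Suc (2*N)))^2)"
      unfolding Q_def by (simp add: prod.nat_ivl_Suc' mult_ac)
    have e2: "Q (1/4) (Suc N) = Q (1/4) N * (1 - (1/4)^2/real (Suc N)^2)"
      unfolding Q_def by (simp add: prod.nat_ivl_Suc' mult_ac)
    have e3: "P (Suc N) = P N * (1 - (1/(2*real(2*N+1)))^2)"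
      unfolding P_def by simp
    have f1: "(1/2)^2/real (Suc (2*N))^2 = (1/(2*real(2*N+1)))^2"
      by (simp add: field_simps power2_eq_square)
    have f2: "(1/2::real)^2/real (Suc (Suc (2*N)))^2 = (1/4)^2/real (Suc N)^2"
      by (simp add: field_simps power2_eq_square)
    show ?case unfolding e1 e2 e3 f1 f2 Suc by (simp add: mult_ac)
  qed
  have sm: "strict_mono (\<lambda>N::nat. 2 * N)" by (simp add: strict_mono_def)
  have L1: "(\<lambda>N. Q (1/2) (2*N)) \<longlonglongrightarrow> 2/pi"
  proof -
    have "Q (1/2) \<longlonglongrightarrow> sin (pi * (1/2)) / (pi * (1/2))"
      unfolding Q_def by (rule sin_product_formula_real') simp
    hence "Q (1/2) \<longlonglongrightarrow> 2/pi" by simp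
    from LIMSEQ_subseq_LIMSEQ[OF this sm] show ?thesis by (simp add: comp_def)
  qed
  have L2: "Q (1/4) \<longlonglongrightarrow> (sqrt 2/2)/(pi/4)"
  proof -
    have "Q (1/4) \<longlonglongrightarrow> sin (pi * (1/4)) / (pi * (1/4))"
      unfolding Q_def by (rule sin_product_formula_real') simp
    moreover have "sin (pi * (1/4)) / (pi * (1/4)) = (sqrt 2/2)/(pi/4)"
      using sin_45 by (simp add: field_simps)
    ultimately show ?thesis by (simp only:)
  qed
  have Qpos: "Q (1/4) N > 0" for N
    unfolding Q_def
  proof (intro prod_pos)
    fix k assume "k \<in> {1..N}"
    hence "real k \<ge> 1" by simp
    hence "real k ^ 2 \<ge> 1" by simp
    hence "(1/4::real)^2 / real k^2 < 1" by (simp add: divide_simps)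
    thus "0 < 1 - (1/4::real)^2 / real k^2" by simp
  qed
  have "(\<lambda>N. Q (1/2) (2*N) / Q (1/4) N) \<longlonglongrightarrow> (2/pi) / ((sqrt 2/2)/(pi/4))"
    by (intro tendsto_divide L1 L2) simp
  moreover have "(2/pi) / ((sqrt 2/2)/(pi/4)) = 1 / sqrt 2"
    by (simp add: field_simps)
  moreover have "Q (1/2) (2*N) / Q (1/4) N = P N" for N
    using split[of N] Qpos[of N] by simp
  ultimately have LP: "P \<longlonglongrightarrow> 1 / sqrt 2" by simp
  have Ppos: "P N > 0" for N
    unfolding P_def
  proof (intro prod_pos)
    fix m assume "m \<in> {..<N}"
    have "real (2*m+1) \<ge> 1" by simp
    hence "(1/(2*real(2*m+1)))^2 < (1::real)"
      unfolding abs_square_less_1 by simp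
    thus "0 < 1 - (1/(2*real(2*m+1)))^2" by simp
  qed
  have "(\<lambda>N. ln (P N)) \<longlonglongrightarrow> ln (1 / sqrt 2)"
    by (intro tendsto_ln LP) simp
  moreover have "ln (1 / sqrt 2) = -(1/2)*ln 2"
    by (simp add: ln_div ln_sqrt)
  moreover have "ln (P N) = (\<Sum>m<N. ln (1 - (1/(2*real(2*m+1)))^2))" for N
    unfolding P_def
  proof (rule ln_prod)
    fix m assume "m \<in> {..<N}"
    have "real (2*m+1) \<ge> 1" by simp
    hence "(1/(2*real(2*m+1)))^2 < (1::real)"
      unfolding abs_square_less_1 by simp
    thus "1 - (1/(2*real(2*m+1)))^2 \<noteq> 0" by simp
  qed simp
  ultimately show ?thesis unfolding sums_def by simp
qed




lemma swap_sums_nonneg: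
  fixes f :: "nat \<Rightarrow> nat \<Rightarrow> real"
  assumes nn: "\<And>j m. f j m \<ge> 0"
  and inner: "\<And>j. (\<lambda>m. f j m) sums g j"
  and outer: "summable g"
  and inner2: "\<And>m. (\<lambda>j. f j m) sums h m"
  shows "h sums (\<Sum>j. g j)"
proof -
  have gnn: "g j \<ge> 0" for j using inner[of j] nn by (metis sums_le sums_zero)
  have g_has: "(g has_sum (\<Sum>j. g j)) UNIV"
    using sums_nonneg_imp_has_sum[OF summable_sums[OF outer]] gnn by blast
  have fh: "((\<lambda>m. (\<lambda>(j,m). f j m) (j, m)) has_sum g j) UNIV" for j
    using sums_nonneg_imp_has_sum[OF inner[of j]] nn by simp
  have fh2: "((\<lambda>j. (\<lambda>(m,j). f j m) (m, j)) has_sum h m) UNIV" for m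
    using sums_nonneg_imp_has_sum[OF inner2[of m]] nn by simp
  have sumbl: "(\<lambda>(j,m). f j m) summable_on Sigma UNIV (\<lambda>_. UNIV)"
    by (rule summable_on_SigmaI[OF fh]) (use g_has has_sum_imp_summable nn in auto)
  have tot: "((\<lambda>(j,m). f j m) has_sum (\<Sum>j. g j)) (Sigma UNIV (\<lambda>_. UNIV))"
    by (rule has_sum_SigmaI[OF fh g_has sumbl])
  hence "((\<lambda>(j,m). f j m) has_sum (\<Sum>j. g j)) (UNIV \<times> UNIV)" by simp
  hence "((\<lambda>(m,j). f j m) has_sum (\<Sum>j. g j)) (UNIV \<times> UNIV)"
    by (subst (asm) has_sum_swap) (simp add: case_prod_unfold)
  hence "((\<lambda>(m,j). f j m) has_sum (\<Sum>j. g j)) (Sigma UNIV (\<lambda>_. UNIV))" by simp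
  from has_sum_Sigma'[OF this fh2] show ?thesis by (rule has_sum_imp_sums)
qed




lemma lam_summable:
  assumes "k \<ge> 1"
  shows "summable (\<lambda>m. 1 / real (2*m+1) ^ (2*k))"
    and "(\<Sum>m. 1 / real (2*m+1) ^ (2*k)) \<le> pi^2/6"
proof -
  have b: "1 / real (2*m+1) ^ (2*k) \<le> 1 / (1 + real m)^2" for m
  proof -
    have "(1 + real m)^2 \<le> real (2*m+1)^2" by (intro power_mono) auto
    also have "\<dots> \<le> real (2*m+1) ^ (2*k)" by (rule power_increasing) (use assms in auto)
    finally show ?thesis by (intro divide_left_mono) auto
  qed
  have s: "(\<lambda>n. 1 / (1 + real n)^2) sums (pi^2/6)" using inverse_squares_sums by simp
  show sm: "summable (\<lambda>m. 1 / real (2*m+1) ^ (2*k))"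
    by (rule summable_comparison_test'[OF sums_summable[OF s], of 0]) (use b in auto)
  show "(\<Sum>m. 1 / real (2*m+1) ^ (2*k)) \<le> pi^2/6"
    using suminf_le[OF b sm sums_summable[OF s]] sums_unique[OF s] by simp
qed

lemma dlambda_eq: "dlambda (2 * real k) = (\<Sum>m. 1 / real (2*m+1) ^ (2*k))"
proof -
  have "real (2*m+1) powr (2 * real k) = real (2*m+1) ^ (2*k)" for m
    using powr_realpow[of "real (2*m+1)" "2*k"] by simp
  then show ?thesis unfolding dlambda_def by simp
qed




theorem corollary2p9:
  fixes r :: nat
  assumes "r \<ge> 2"
  shows "logC r (1/4) = complex_of_real
    ((1/4) ^ (r - 1) * (- (1/2) * ln 2 + real (r - 1) *
      (\<Sum>m. let n = Suc m in
         dlambda (2 * real n) / (real n * real (2 * n + r - 1) * 2 ^ (2 * n)))))"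
proof -
  define a where "a m = 1 / (2 * real (2*m+1))" for m
  have a_pos: "0 < a m" "a m < 1" for m unfolding a_def by (auto simp: field_simps)
  define F where "F m = (1/a m)^(r-1) * (LPr r (a m) + (-1)^(r-1) * LPr r (- a m))" for m
  define f where "f j m = real (r-1) * a m^(2*j+2) / (real (j+1) * real (2*j+r+1))" for j m
  define tm where "tm j = dlambda (2 * real (Suc j)) /
       (real (Suc j) * real (2 * Suc j + r - 1) * 2 ^ (2 * Suc j))" for j
  define g where "g j = real (r-1) * tm j" for j
  have f_nn: "f j m \<ge> 0" for j m unfolding f_def using a_pos[of m] by simp
  have ap: "a m ^ (2*j+2) = 1 / 2 ^ (2 * Suc j) * (1 / real (2*m+1) ^ (2 * Suc j))" for j m
  proof -
    have k: "2*j+2 = 2 * Suc j" by simp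
    have "(1 / (2 * real (2*m+1))) ^ (2 * Suc j) = 1 / 2 ^ (2 * Suc j) * (1 / real (2*m+1) ^ (2 * Suc j))"
      by (simp only: power_divide power_mult_distrib power_one) simp
    thus ?thesis unfolding a_def k .
  qed
  have inner: "(\<lambda>m. f j m) sums g j" for j
  proof -
    have "(\<lambda>m. 1 / real (2*m+1) ^ (2 * Suc j)) sums dlambda (2 * real (Suc j))"
      unfolding dlambda_eq using lam_summable(1)[of "Suc j"] by (simp add: summable_sums)
    hence "(\<lambda>m. real (r-1) / (real (j+1) * real (2*j+r+1)) * (1 / 2 ^ (2 * Suc j)) *
          (1 / real (2*m+1) ^ (2 * Suc j))) sums
          (real (r-1) / (real (j+1) * real (2*j+r+1)) * (1 / 2 ^ (2 * Suc j)) * dlambda (2 * real (Suc j)))"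
      by (rule sums_mult)
    moreover have "2 * Suc j + r - 1 = 2*j+r+1" by simp
    ultimately show ?thesis unfolding f_def g_def tm_def ap
      by (simp add: field_simps)
  qed
  have g_sum: "summable g"
  proof (rule summable_comparison_test'[of "\<lambda>j. real (r-1) * (pi^2/6) * (1/4)^(Suc j)" 0])
    show "summable (\<lambda>j. real (r-1) * (pi^2/6) * (1/4::real)^(Suc j))"
      by (intro summable_mult summable_mult2 summable_Suc_iff[THEN iffD2] summable_geometric) simp
  next
    fix j :: nat
    have d0: "0 \<le> dlambda (2 * real (Suc j))" unfolding dlambda_eq
      by (rule suminf_nonneg[OF lam_summable(1)]) auto
    have d1: "dlambda (2 * real (Suc j)) \<le> pi^2/6" unfolding dlambda_eq
      by (rule lam_summable(2)) simp
    have h: "2 * Suc j + r - 1 = 2*j+r+1" by simp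
    have p4: "(2::real) ^ (2 * Suc j) = 4 ^ Suc j" by (simp only: power_mult) simp
    have "tm j = (1/4)^(Suc j) * dlambda (2 * real (Suc j)) / (real (Suc j) * real (2*j+r+1))"
      unfolding tm_def h p4 power_one_over by (simp only: divide_divide_eq_left mult_ac) simp
    also have "\<dots> \<le> (1/4)^(Suc j) * dlambda (2 * real (Suc j)) / 1"
    proof -
      have "1 \<le> Suc j * (2*j+r+1)" by simp
      hence dd: "(1::real) \<le> real (Suc j) * real (2*j+r+1)"
        by (metis of_nat_1 of_nat_le_iff of_nat_mult)
      show ?thesis using d0 dd by (intro divide_left_mono) auto
    qed
    also have "\<dots> \<le> (1/4)^(Suc j) * (pi^2/6)"
      using d1 by simp
    finally have t1: "tm j \<le> (1/4)^(Suc j) * (pi^2/6)" .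
    have t0: "tm j \<ge> 0" unfolding tm_def using d0 by simp
    have "real (r-1) * tm j \<le> real (r-1) * ((1/4)^(Suc j) * (pi^2/6))"
      by (rule mult_left_mono[OF t1]) simp
    moreover have "0 \<le> real (r-1) * tm j" using t0 by simp
    ultimately have "real (r-1) * tm j \<le> real (r-1) * ((1/4)^(Suc j) * (pi^2/6))"
      "0 \<le> real (r-1) * tm j" by auto
    thus "norm (g j) \<le> real (r-1) * (pi^2/6) * (1/4)^(Suc j)"
      unfolding g_def by (simp only: real_norm_def abs_of_nonneg mult_ac)
  qed
  have inner2: "(\<lambda>j. f j m) sums (F m - ln (1 - (a m)^2))" for m
    unfolding f_def F_def using key_sums[OF a_pos(1)[of m] a_pos(2)[of m] assms] by simp
  have G: "(\<lambda>m. F m - ln (1 - (a m)^2)) sums (\<Sum>j. g j)"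
    by (rule swap_sums_nonneg[OF f_nn inner g_sum inner2])
  have L: "(\<lambda>m. ln (1 - (a m)^2)) sums (-(1/2)*ln 2)"
    unfolding a_def by (rule ln2_sums)
  have FS: "F sums ((\<Sum>j. g j) + -(1/2)*ln 2)"
    using sums_add[OF G L] by simp
  have gsum: "(\<Sum>j. g j) = real (r-1) * (\<Sum>j. tm j)"
  proof -
    have "r - 1 \<noteq> 0" using assms by simp
    hence "summable tm" using g_sum unfolding g_def by (simp add: summable_cmult_iff)
    thus ?thesis unfolding g_def by (rule suminf_mult)
  qed
  have tmeq: "(\<Sum>m. let n = Suc m in
         dlambda (2 * real n) / (real n * real (2 * n + r - 1) * 2 ^ (2 * n))) = (\<Sum>j. tm j)"
    unfolding tm_def Let_def by simp
  define T where "T m = (1/4)^(r-1) * F m" for m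
  have TS: "T sums ((1/4)^(r-1) * (- (1/2) * ln 2 + real (r - 1) * (\<Sum>j. tm j)))"
    unfolding T_def using sums_mult[OF FS, of "(1/4)^(r-1)"] gsum by (simp add: algebra_simps)
  have teq: "(let n = of_nat (2 * m + 1) :: complex in
       (n / 2) ^ (r - 1) * (LogP r (2 * (1/4) / n) + (-1) ^ (r - 1) * LogP r (- 2 * (1/4) / n)))
     = complex_of_real (T m)" for m
  proof -
    have e1: "2 * (1/4) / (of_nat (2*m+1) :: complex) = complex_of_real (a m)"
      unfolding a_def by (simp add: field_simps)
    have e2: "- 2 * (1/4) / (of_nat (2*m+1) :: complex) = complex_of_real (- a m)"
      unfolding a_def by (simp add: field_simps)
    have e3: "(of_nat (2*m+1) / 2 :: complex) = complex_of_real ((1/4) * (1 / a m))"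
      unfolding a_def by (simp add: field_simps)
    have lp1: "LogP r (complex_of_real (a m)) = complex_of_real (LPr r (a m))"
      using a_pos[of m] by (intro LogP_real) simp
    have lp2: "LogP r (complex_of_real (- a m)) = complex_of_real (LPr r (- a m))"
      using a_pos[of m] by (intro LogP_real) simp
    have re: "((1/4) * (1 / a m)) ^ (r-1) * (LPr r (a m) + (-1)^(r-1) * LPr r (- a m)) = T m"
      unfolding T_def F_def by (simp only: power_mult_distrib mult_ac)
    have "(complex_of_real ((1/4) * (1 / a m))) ^ (r-1) *
       (complex_of_real (LPr r (a m)) + (-1)^(r-1) * complex_of_real (LPr r (- a m)))
      = complex_of_real (((1/4) * (1 / a m)) ^ (r-1) * (LPr r (a m) + (-1)^(r-1) * LPr r (- a m)))"
      by (simp only: of_real_mult of_real_power of_real_add of_real_minus of_real_1)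
    then show ?thesis unfolding Let_def e1 e2 e3 lp1 lp2 re .
  qed
  have "(\<lambda>m. complex_of_real (T m)) sums
      complex_of_real ((1/4)^(r-1) * (- (1/2) * ln 2 + real (r - 1) * (\<Sum>j. tm j)))"
    using TS by (simp only: sums_of_real_iff)
  hence "(\<lambda>m. let n = of_nat (2 * m + 1) :: complex in
       (n / 2) ^ (r - 1) * (LogP r (2 * (1/4) / n) + (-1) ^ (r - 1) * LogP r (- 2 * (1/4) / n))) sums
      complex_of_real ((1/4)^(r-1) * (- (1/2) * ln 2 + real (r - 1) * (\<Sum>j. tm j)))"
    by (simp only: teq)
  hence "logC r (1/4) = complex_of_real ((1/4)^(r-1) * (- (1/2) * ln 2 + real (r - 1) * (\<Sum>j. tm j)))"
    unfolding logC_def by (rule sums_unique[symmetric])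
  thus ?thesis unfolding tmeq .
qed


end
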